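(* Let $Z_+=\{z\in\mathbb{Z}: z>0\}$ and $Z_-=\mathbb{Z}\setminus Z_+$. Let $K$ be an infinite compact (Hausdorff) group. Let $D=K^{Z_-}$ carry the discrete topology and $C=K^{Z_+}$ carry the Tychonoff product topology, both with coordinatewise group operations. Then the topological group $G=D\times C$ (identified with $K^{\mathbb{Z}}$ as a group, with the product topology of $D$ and $C$) is not $g$-reversible; specifically, the right shift $f((x_n)_{n\in\mathbb{Z}})=(x_{n-1})_{n\in\mathbb{Z}}$ is a continuous automorphism of $G$ which is not open.
   Context: All topological groups are assumed Hausdorff. A topological group $G$ is called $g$-reversible if every continuous automorphism of $G$ (i.e. every continuous group isomorphism of $G$ onto itself) is an open map. *)

theory Defs
  imports "HOL-Analysis.Analysis" "HOL-Algebra.Algebra"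
begin

definition topological_group :: "('a, 'b) monoid_scheme \<Rightarrow> 'a topology \<Rightarrow> bool" where
  "topological_group G T \<longleftrightarrow> group G \<and> topspace T = carrier G \<and> Hausdorff_space T \<and>
     continuous_map (prod_topology T T) T (\<lambda>(x, y). x \<otimes>\<^bsub>G\<^esub> y) \<and>
     continuous_map T T (\<lambda>x. inv\<^bsub>G\<^esub> x)"

definition g_reversible :: "('a, 'b) monoid_scheme \<Rightarrow> 'a topology \<Rightarrow> bool" where
  "g_reversible G T \<longleftrightarrow> topological_group G T \<and>
     (\<forall>f. f \<in> iso G G \<and> continuous_map T T f \<longrightarrow> open_map T T f)"

definition Zplus :: "int set" where "Zplus = {z. z > 0}"
definition Zminus :: "int set" where "Zminus = UNIV - Zplus"

definition KZ_group :: "('a, 'b) monoid_scheme \<Rightarrow> (int \<Rightarrow> 'a) monoid" where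
  "KZ_group K = product_group (UNIV :: int set) (\<lambda>_. K)"

text \<open>The topology on K^Z transported from D \<times> C, where D = K^{Z_-} is discrete and
  C = K^{Z_+} carries the Tychonoff topology; the identification is
  x \<mapsto> (x restricted to Z_-, x restricted to Z_+).\<close>
definition KZ_topology :: "('a, 'b) monoid_scheme \<Rightarrow> 'a topology \<Rightarrow> (int \<Rightarrow> 'a) topology" where
  "KZ_topology K T = pullback_topology (carrier (KZ_group K))
     (\<lambda>x. (restrict x Zminus, restrict x Zplus))
     (prod_topology (discrete_topology (\<Pi>\<^sub>E i\<in>Zminus. carrier K))
                    (product_topology (\<lambda>_. T) Zplus))"

definition right_shift :: "(int \<Rightarrow> 'a) \<Rightarrow> (int \<Rightarrow> 'a)" where
  "right_shift x = (\<lambda>n. x (n - 1))"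

end

theory Submission imports Defs begin

lemma Hausdorff_pullback:
  assumes "Hausdorff_space Y" "inj_on f A"
  shows "Hausdorff_space (pullback_topology A f Y)"
  unfolding Hausdorff_space_def topspace_pullback_topology
proof (intro allI impI)
  fix x y assume xy: "x \<in> f -` topspace Y \<inter> A \<and> y \<in> f -` topspace Y \<inter> A \<and> x \<noteq> y"
  then have "f x \<noteq> f y" using assms(2) by (auto simp: inj_on_def)
  then obtain U V where UV: "openin Y U" "openin Y V" "f x \<in> U" "f y \<in> V" "disjnt U V"
    using assms(1) xy unfolding Hausdorff_space_def by blast
  show "\<exists>U V. openin (pullback_topology A f Y) U \<and> openin (pullback_topology A f Y) V \<and> x \<in> U \<and> y \<in> V \<and> disjnt U V"
    apply (rule exI[of _ "f -` U \<inter> A"], rule exI[of _ "f -` V \<inter> A"])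
    using UV xy by (auto simp: openin_pullback_topology disjnt_def)
qed

locale KZ =
  fixes K :: "('a, 'b) monoid_scheme" and T :: "'a topology"
  assumes tg: "topological_group K T"
begin

lemma grp: "group K" and tsp: "topspace T = carrier K"
  using tg by (auto simp: topological_group_def)


lemma carr: "carrier (KZ_group K) = {x. \<forall>n. x n \<in> carrier K}"
  by (auto simp: KZ_group_def PiE_def Pi_def)

lemma topX: "topspace (KZ_topology K T) = {x. \<forall>n. x n \<in> carrier K}"
  unfolding KZ_topology_def topspace_pullback_topology carr
  by (auto simp: tsp PiE_def Pi_def)

lemma into_X:
  assumes "\<And>z n. z \<in> topspace Z \<Longrightarrow> g z n \<in> carrier K"
    and "continuous_map Z (discrete_topology (\<Pi>\<^sub>E i\<in>Zminus. carrier K)) (\<lambda>z. restrict (g z) Zminus)"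
    and "\<And>n. n \<in> Zplus \<Longrightarrow> continuous_map Z T (\<lambda>z. g z n)"
  shows "continuous_map Z (KZ_topology K T) g"
  unfolding KZ_topology_def
proof (rule continuous_map_pullback')
  show "topspace Z \<subseteq> g -` carrier (KZ_group K)" using assms(1) by (auto simp: carr)
  have "continuous_map Z (product_topology (\<lambda>_. T) Zplus) (\<lambda>z. restrict (g z) Zplus)"
    unfolding continuous_map_componentwise using assms(3) by auto
  then show "continuous_map Z (prod_topology (discrete_topology (\<Pi>\<^sub>E i\<in>Zminus. carrier K)) (product_topology (\<lambda>_. T) Zplus))
     ((\<lambda>x. (restrict x Zminus, restrict x Zplus)) \<circ> g)"
    using assms(2) by (simp add: o_def continuous_map_pairedI)
qed

lemma cont_minus: "continuous_map (KZ_topology K T) (discrete_topology (\<Pi>\<^sub>E i\<in>Zminus. carrier K)) (\<lambda>x. restrict x Zminus)"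
proof -
  have "continuous_map (KZ_topology K T) (discrete_topology (\<Pi>\<^sub>E i\<in>Zminus. carrier K)) (fst \<circ> (\<lambda>x. (restrict x Zminus, restrict x Zplus)))"
    unfolding KZ_topology_def by (rule continuous_map_pullback) (rule continuous_map_fst)
  then show ?thesis by (simp add: o_def)
qed

lemma coord: "continuous_map (KZ_topology K T) T (\<lambda>x. x n)"
proof (cases "n \<in> Zplus")
  case True
  have "continuous_map (KZ_topology K T) T ((\<lambda>p. snd p n) \<circ> (\<lambda>x. (restrict x Zminus, restrict x Zplus)))"
    unfolding KZ_topology_def
    by (rule continuous_map_pullback) (intro continuous_map_compose[OF continuous_map_snd, unfolded o_def] continuous_map_product_projection True)
  then show ?thesis using True by (simp add: o_def)
next
  case False
  then have n: "n \<in> Zminus" by (simp add: Zminus_def)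
  have "continuous_map (discrete_topology (\<Pi>\<^sub>E i\<in>Zminus. carrier K)) T (\<lambda>a. a n)" using n by (auto simp: tsp)
  from continuous_map_compose[OF cont_minus this] show ?thesis using n by (simp add: o_def)
qed

lemma from_minus:
  assumes "h \<in> (\<Pi>\<^sub>E i\<in>Zminus. carrier K) \<rightarrow> topspace Z"
  shows "continuous_map (KZ_topology K T) Z (\<lambda>x. h (restrict x Zminus))"
  using continuous_map_compose[OF cont_minus, of Z h] assms by (simp add: o_def)


lemma mult_KZ: "(\<lambda>(x, y). x \<otimes>\<^bsub>KZ_group K\<^esub> y) = (\<lambda>p. (\<lambda>i. fst p i \<otimes>\<^bsub>K\<^esub> snd p i))"
  by (auto simp: KZ_group_def fun_eq_iff)

lemma cont_mult: "continuous_map (prod_topology (KZ_topology K T) (KZ_topology K T)) (KZ_topology K T)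
   (\<lambda>(x, y). x \<otimes>\<^bsub>KZ_group K\<^esub> y)"
  unfolding mult_KZ
proof (rule into_X)
  fix z n assume "z \<in> topspace (prod_topology (KZ_topology K T) (KZ_topology K T))"
  then show "fst z n \<otimes>\<^bsub>K\<^esub> snd z n \<in> carrier K"
    by (auto simp: topX group.subgroup_self[OF grp] subgroup.m_closed)
next
  let ?A = "\<Pi>\<^sub>E i\<in>Zminus. carrier K"
  have q: "continuous_map (prod_topology (KZ_topology K T) (KZ_topology K T)) (discrete_topology (?A \<times> ?A))
     (\<lambda>z. (restrict (fst z) Zminus, restrict (snd z) Zminus))"
    unfolding prod_topology_discrete_topology
    by (intro continuous_map_pairedI continuous_map_compose[OF continuous_map_fst cont_minus, unfolded o_def]
      continuous_map_compose[OF continuous_map_snd cont_minus, unfolded o_def])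
  have h: "continuous_map (discrete_topology (?A \<times> ?A)) (discrete_topology ?A)
      (\<lambda>(a,b). restrict (\<lambda>i. a i \<otimes>\<^bsub>K\<^esub> b i) Zminus)"
    by (auto simp: PiE_def Pi_def group.subgroup_self[OF grp] subgroup.m_closed)
  from continuous_map_compose[OF q h]
  show "continuous_map (prod_topology (KZ_topology K T) (KZ_topology K T)) (discrete_topology ?A)
     (\<lambda>z. restrict (\<lambda>i. fst z i \<otimes>\<^bsub>K\<^esub> snd z i) Zminus)"
    by (simp add: o_def restrict_def cong: if_cong)
next
  fix n :: int
  have m: "continuous_map (prod_topology T T) T (\<lambda>(x, y). x \<otimes>\<^bsub>K\<^esub> y)"
    using tg by (simp add: topological_group_def)
  have p: "continuous_map (prod_topology (KZ_topology K T) (KZ_topology K T)) (prod_topology T T)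
     (\<lambda>z. (fst z n, snd z n))"
    by (intro continuous_map_pairedI continuous_map_compose[OF continuous_map_fst coord, unfolded o_def]
      continuous_map_compose[OF continuous_map_snd coord, unfolded o_def])
  from continuous_map_compose[OF p m]
  show "continuous_map (prod_topology (KZ_topology K T) (KZ_topology K T)) T (\<lambda>z. fst z n \<otimes>\<^bsub>K\<^esub> snd z n)"
    by (simp add: o_def)
qed

lemma cont_inv: "continuous_map (KZ_topology K T) (KZ_topology K T) (\<lambda>x. inv\<^bsub>KZ_group K\<^esub> x)"
proof (rule continuous_map_eq)
  show "continuous_map (KZ_topology K T) (KZ_topology K T) (\<lambda>x. (\<lambda>i. inv\<^bsub>K\<^esub> x i))"
  proof (rule into_X)
    fix z n assume "z \<in> topspace (KZ_topology K T)"
    then show "inv\<^bsub>K\<^esub> z n \<in> carrier K" by (auto simp: topX group.inv_closed[OF grp])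
  next
    have "continuous_map (KZ_topology K T) (discrete_topology (\<Pi>\<^sub>E i\<in>Zminus. carrier K))
        (\<lambda>x. (\<lambda>a. restrict (\<lambda>i. inv\<^bsub>K\<^esub> a i) Zminus) (restrict x Zminus))"
      by (rule from_minus) (auto simp: PiE_def Pi_def extensional_def group.inv_closed[OF grp])
    then show "continuous_map (KZ_topology K T) (discrete_topology (\<Pi>\<^sub>E i\<in>Zminus. carrier K))
        (\<lambda>x. restrict (\<lambda>i. inv\<^bsub>K\<^esub> x i) Zminus)"
      by (simp add: restrict_def cong: if_cong)
  next
    fix n :: int
    have i: "continuous_map T T (\<lambda>x. inv\<^bsub>K\<^esub> x)" using tg by (simp add: topological_group_def)
    from continuous_map_compose[OF coord i] show "continuous_map (KZ_topology K T) T (\<lambda>x. inv\<^bsub>K\<^esub> x n)"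
      by (simp add: o_def)
  qed
next
  fix x assume "x \<in> topspace (KZ_topology K T)"
  then have "x \<in> carrier (product_group (UNIV::int set) (\<lambda>_. K))"
    by (simp add: topX KZ_group_def[symmetric] carr)
  then show "(\<lambda>i. inv\<^bsub>K\<^esub> x i) = inv\<^bsub>KZ_group K\<^esub> x"
    unfolding KZ_group_def by (subst inv_product_group) (auto simp: grp)
qed

lemma hausdorff_X: "Hausdorff_space (KZ_topology K T)"
  unfolding KZ_topology_def
proof (rule Hausdorff_pullback)
  have "Hausdorff_space T" using tg by (simp add: topological_group_def)
  then show "Hausdorff_space (prod_topology (discrete_topology (\<Pi>\<^sub>E i\<in>Zminus. carrier K)) (product_topology (\<lambda>_. T) Zplus))"
    by (auto simp: Hausdorff_space_prod_topology Hausdorff_space_product_topology Hausdorff_space_discrete_topology)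
  show "inj_on (\<lambda>x. (restrict x Zminus, restrict x Zplus)) (carrier (KZ_group K))"
  proof (rule inj_onI)
    fix x y assume "(restrict x Zminus, restrict x Zplus) = (restrict y Zminus, restrict y Zplus)"
    then have "\<forall>n. x n = y n" by (metis Zminus_def Diff_iff UNIV_I prod.inject restrict_apply')
    then show "x = y" by auto
  qed
qed

lemma tg_KZ: "topological_group (KZ_group K) (KZ_topology K T)"
  unfolding topological_group_def
  using cont_mult cont_inv hausdorff_X grp
  by (simp add: KZ_group_def topX flip: carr)


lemma Zminus_iff: "n \<in> Zminus \<longleftrightarrow> n \<le> 0" and Zplus_iff: "n \<in> Zplus \<longleftrightarrow> n > 0"
  by (auto simp: Zminus_def Zplus_def)

lemma cont_shift: "continuous_map (KZ_topology K T) (KZ_topology K T) right_shift"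
proof (rule into_X)
  fix z n assume "z \<in> topspace (KZ_topology K T)"
  then show "right_shift z n \<in> carrier K" by (auto simp: topX right_shift_def)
next
  have "continuous_map (KZ_topology K T) (discrete_topology (\<Pi>\<^sub>E i\<in>Zminus. carrier K))
      (\<lambda>x. (\<lambda>a. restrict (\<lambda>n. a (n - 1)) Zminus) (restrict x Zminus))"
    by (rule from_minus) (auto simp: PiE_def Pi_def extensional_def Zminus_iff)
  then show "continuous_map (KZ_topology K T) (discrete_topology (\<Pi>\<^sub>E i\<in>Zminus. carrier K))
      (\<lambda>x. restrict (right_shift x) Zminus)"
    by (simp add: restrict_def right_shift_def Zminus_iff cong: if_cong)
next
  fix n :: int
  show "continuous_map (KZ_topology K T) T (\<lambda>x. right_shift x n)"
    unfolding right_shift_def by (rule coord)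
qed

lemma iso_shift: "right_shift \<in> iso (KZ_group K) (KZ_group K)"
  unfolding iso_def hom_def
proof (intro CollectI conjI ballI)
  show "right_shift \<in> carrier (KZ_group K) \<rightarrow> carrier (KZ_group K)"
    by (auto simp: carr right_shift_def)
  fix x y assume "x \<in> carrier (KZ_group K)" "y \<in> carrier (KZ_group K)"
  show "right_shift (x \<otimes>\<^bsub>KZ_group K\<^esub> y) = right_shift x \<otimes>\<^bsub>KZ_group K\<^esub> right_shift y"
    by (simp add: KZ_group_def right_shift_def fun_eq_iff)
next
  show "bij_betw right_shift (carrier (KZ_group K)) (carrier (KZ_group K))"
    by (rule bij_betw_byWitness[where f' = "\<lambda>x n. x (n + 1)"]) (auto simp: carr right_shift_def)
qed

lemma not_open_shift:
  assumes inf: "infinite (carrier K)" and cpt: "compact_space T"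
  shows "\<not> open_map (KZ_topology K T) (KZ_topology K T) right_shift"
proof
  assume om: "open_map (KZ_topology K T) (KZ_topology K T) right_shift"
  have sing: "openin T {t}" if t: "t \<in> carrier K" for t
  proof -
    define a where "a = restrict (\<lambda>_::int. t) Zminus"
    define U where "U = {x \<in> topspace (KZ_topology K T). restrict x Zminus \<in> {a}}"
    have "openin (discrete_topology (\<Pi>\<^sub>E i\<in>Zminus. carrier K)) {a}"
      using t by (auto simp: a_def)
    then have "openin (KZ_topology K T) U"
      unfolding U_def by (rule openin_continuous_map_preimage[OF cont_minus])
    then have oU: "openin (KZ_topology K T) (right_shift ` U)"
      using om by (simp add: open_map_def)
    define e where "e = (\<lambda>s (n::int). if n = 1 then s else t)"
    have ce: "continuous_map T (KZ_topology K T) e"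
    proof (rule into_X)
      fix z n assume "z \<in> topspace T" then show "e z n \<in> carrier K" using t by (auto simp: e_def tsp)
    next
      have "continuous_map T (discrete_topology (\<Pi>\<^sub>E i\<in>Zminus. carrier K)) (\<lambda>_. a)"
        using t by (auto simp: a_def)
      moreover have "restrict (e z) Zminus = a" for z
        by (auto simp: e_def a_def fun_eq_iff Zminus_iff)
      ultimately show "continuous_map T (discrete_topology (\<Pi>\<^sub>E i\<in>Zminus. carrier K)) (\<lambda>z. restrict (e z) Zminus)"
        by simp
    next
      fix n :: int
      show "continuous_map T T (\<lambda>z. e z n)"
        using t by (cases "n = 1") (auto simp: e_def tsp)
    qed
    have "openin T {s \<in> topspace T. e s \<in> right_shift ` U}"
      by (rule openin_continuous_map_preimage[OF ce oU])
    moreover have "{s \<in> topspace T. e s \<in> right_shift ` U} = {t}"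
    proof (intro equalityI subsetI)
      fix s assume "s \<in> {s \<in> topspace T. e s \<in> right_shift ` U}"
      then obtain x where x: "x \<in> U" "e s = right_shift x" by auto
      then have "s = x 0" by (metis e_def right_shift_def diff_self)
      moreover have "restrict x Zminus 0 = a 0" using x by (simp add: U_def)
      ultimately show "s \<in> {t}" by (simp add: a_def Zminus_iff)
    next
      fix s assume "s \<in> {t}"
      then have s: "s = t" by simp
      have "(\<lambda>_. t) \<in> U" using t by (auto simp: U_def topX a_def fun_eq_iff)
      moreover have "e t = right_shift (\<lambda>_. t)" by (simp add: e_def right_shift_def fun_eq_iff)
      ultimately show "s \<in> {s \<in> topspace T. e s \<in> right_shift ` U}" using s t by (auto simp: tsp)
    qed
    ultimately show ?thesis by simp
  qed
  then have "discrete_topology (carrier K) = T"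
    by (simp add: discrete_topology_unique tsp)
  then have "finite (carrier K)" using cpt compact_space_discrete_topology by metis
  then show False using inf by simp
qed

end

theorem mainTheorem6:
  fixes K :: "('a, 'b) monoid_scheme" and T :: "'a topology"
  assumes "topological_group K T"
    and "infinite (carrier K)"
    and "compact_space T"
  shows "topological_group (KZ_group K) (KZ_topology K T)
       \<and> \<not> g_reversible (KZ_group K) (KZ_topology K T)
       \<and> right_shift \<in> iso (KZ_group K) (KZ_group K)
       \<and> continuous_map (KZ_topology K T) (KZ_topology K T) right_shift
       \<and> \<not> open_map (KZ_topology K T) (KZ_topology K T) right_shift"
proof -
  interpret KZ K T by standard (rule assms(1))
  show ?thesis
    using tg_KZ iso_shift cont_shift not_open_shift[OF assms(2,3)]
    by (auto simp: g_reversible_def)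
qed

end
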